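(* Let $A$ be a unital $C^*$-algebra and $a\in A$. (i) If $\rho(a^*,a)=0$, then $\sigma(a)\subset\mathbb R$. (ii) If $a$ is invertible and $\rho(a^*,a^{-1})=0$, then $\sigma(a)\subseteq\{\lambda\in\mathbb C:|\lambda|=1\}$.
   Context: For $a,b\in A$ and $n\geq 0$ put $C_{a,b}^n\mathbf 1=\sum_{k=0}^n(-1)^k\binom{n}{k}a^{n-k}b^k$ (with $a^0=b^0=\mathbf 1$), and $\rho(a,b)=\limsup_{n\to\infty}\|C_{a,b}^n\mathbf 1\|^{1/n}$. *)

theory Defs
  imports Complex_Main "HOL-Library.Liminf_Limsup" "HOL-Library.Extended_Real"
begin

class scaleC =
  fixes scaleC :: "complex \<Rightarrow> 'a \<Rightarrow> 'a" (infixr "*\<^sub>C" 75)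

class complex_banach_algebra_1 = scaleC + real_normed_algebra_1 + banach +
  assumes scaleC_add_right: "c *\<^sub>C (x + y) = c *\<^sub>C x + c *\<^sub>C y"
    and scaleC_add_left: "(b + c) *\<^sub>C x = b *\<^sub>C x + c *\<^sub>C x"
    and scaleC_scaleC: "b *\<^sub>C (c *\<^sub>C x) = (b * c) *\<^sub>C x"
    and scaleC_one: "(1::complex) *\<^sub>C x = x"
    and scaleR_scaleC: "r *\<^sub>R x = complex_of_real r *\<^sub>C x"
    and norm_scaleC: "norm (c *\<^sub>C x) = cmod c * norm x"
    and mult_scaleC_left: "(c *\<^sub>C x) * y = c *\<^sub>C (x * y)"
    and mult_scaleC_right: "x * (c *\<^sub>C y) = c *\<^sub>C (x * y)"

class cstar_algebra = complex_banach_algebra_1 +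
  fixes adj :: "'a \<Rightarrow> 'a"
  assumes adj_adj: "adj (adj x) = x"
    and adj_add: "adj (x + y) = adj x + adj y"
    and adj_mult: "adj (x * y) = adj y * adj x"
    and adj_scaleC: "adj (c *\<^sub>C x) = cnj c *\<^sub>C adj x"
    and cstar_identity: "norm (adj x * x) = (norm x)^2"

definition alg_invertible :: "'a::ring_1 \<Rightarrow> bool" where
  "alg_invertible x \<longleftrightarrow> (\<exists>y. x * y = 1 \<and> y * x = 1)"

definition alg_inv :: "'a::ring_1 \<Rightarrow> 'a" where
  "alg_inv x = (THE y. x * y = 1 \<and> y * x = 1)"

definition spectrum :: "'a::complex_banach_algebra_1 \<Rightarrow> complex set" where
  "spectrum a = {z. \<not> alg_invertible (z *\<^sub>C 1 - a)}"

definition Cpow1 :: "'a::ring_1 \<Rightarrow> 'a \<Rightarrow> nat \<Rightarrow> 'a" where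
  "Cpow1 a b n = (\<Sum>k\<le>n. (-1)^k * of_nat (n choose k) * a^(n-k) * b^k)"

definition rho :: "'a::real_normed_algebra_1 \<Rightarrow> 'a \<Rightarrow> ereal" where
  "rho a b = limsup (\<lambda>n. ereal (root n (norm (Cpow1 a b n))))"

end

theory Submission
  imports Defs
begin

lemma scaleC_zero_right [simp]: "c *\<^sub>C (0::'a::complex_banach_algebra_1) = 0"
proof -
  have "c *\<^sub>C (0::'a) = c *\<^sub>C 0 + c *\<^sub>C 0" using scaleC_add_right[of c "0::'a" 0] by simp
  then show ?thesis by simp
qed

lemma scaleC_zero_left [simp]: "0 *\<^sub>C (x::'a::complex_banach_algebra_1) = 0"
proof -
  have "0 *\<^sub>C x = 0 *\<^sub>C x + 0 *\<^sub>C x" using scaleC_add_left[of 0 0 x] by simp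
  then show ?thesis by simp
qed

lemma scaleC_minus_right: "c *\<^sub>C (- x) = - (c *\<^sub>C (x::'a::complex_banach_algebra_1))"
proof -
  have "c *\<^sub>C (- x) + c *\<^sub>C x = 0" using scaleC_add_right[of c "-x" x] by simp
  then show ?thesis by (simp add: eq_neg_iff_add_eq_0)
qed

lemma scaleC_diff_right: "c *\<^sub>C (x - y) = c *\<^sub>C x - c *\<^sub>C (y::'a::complex_banach_algebra_1)"
  by (simp only: diff_conv_add_uminus scaleC_add_right scaleC_minus_right)

lemma scaleC_minus_left: "(- c) *\<^sub>C x = - (c *\<^sub>C (x::'a::complex_banach_algebra_1))"
proof -
  have "(- c) *\<^sub>C x + c *\<^sub>C x = 0" using scaleC_add_left[of "-c" c x] by simp
  then show ?thesis by (simp add: eq_neg_iff_add_eq_0)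
qed

lemma scaleC_diff_left: "(b - c) *\<^sub>C x = b *\<^sub>C x - c *\<^sub>C (x::'a::complex_banach_algebra_1)"
  using scaleC_add_left[of b "-c" x] scaleC_minus_left[of c x] by simp

lemma scaleC_sum_right: "c *\<^sub>C sum f A = (\<Sum>i\<in>A. c *\<^sub>C (f i::'a::complex_banach_algebra_1))"
  by (induction A rule: infinite_finite_induct) (auto simp: scaleC_add_right)

lemma scaleC_sum_left: "(sum f A) *\<^sub>C (x::'a::complex_banach_algebra_1) = (\<Sum>i\<in>A. f i *\<^sub>C x)"
  by (induction A rule: infinite_finite_induct) (auto simp: scaleC_add_left)

lemma of_real_mult_scaleC: "of_real r * (y::'a::complex_banach_algebra_1) = complex_of_real r *\<^sub>C y"
  by (simp add: of_real_def mult_scaleC_left scaleR_scaleC)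

lemma alg_inv_prod:
  fixes x y :: "'a::ring_1"
  assumes "alg_invertible x" "alg_invertible y" shows "alg_invertible (x * y)"
proof -
  obtain x' where x: "x * x' = 1" "x' * x = 1" using assms(1) unfolding alg_invertible_def by blast
  obtain y' where y: "y * y' = 1" "y' * y = 1" using assms(2) unfolding alg_invertible_def by blast
  have "x * y * (y' * x') = x * (y * y') * x'" by (simp add: mult.assoc)
  also have "\<dots> = 1" using x y by simp
  finally have 1: "x * y * (y' * x') = 1" .
  have "(y' * x') * (x * y) = y' * (x' * x) * y" by (simp add: mult.assoc)
  also have "\<dots> = 1" using x y by simp
  finally have 2: "(y' * x') * (x * y) = 1" .
  show ?thesis using 1 2 unfolding alg_invertible_def by blast
qed

lemma alg_inv_minus: "alg_invertible (x::'a::ring_1) \<Longrightarrow> alg_invertible (- x)"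
  unfolding alg_invertible_def
  by (elim exE, rule_tac x="- y" in exI, simp)

lemma neumann:
  fixes w :: "'a::complex_banach_algebra_1"
  assumes "norm w < 1" shows "alg_invertible (1 - w)"
proof -
  have sm: "summable (\<lambda>n. w ^ n)"
    by (rule summable_comparison_test[of _ "\<lambda>n. norm w ^ n"])
       (auto intro!: summable_geometric norm_power_ineq simp: assms)
  define s where "s = (\<Sum>n. w ^ n)"
  have lim0: "(\<lambda>n. w ^ n) \<longlonglongrightarrow> 0"
    using summable_LIMSEQ_zero[OF sm] .
  have t: "(\<lambda>n. w ^ n - w ^ Suc n) sums (w ^ 0 - 0)"
  proof -
    have l2: "(\<lambda>k. - (w ^ k)) \<longlonglongrightarrow> 0" using tendsto_minus[OF lim0] by simp
    have "(\<lambda>n. (\<lambda>k. - (w ^ k)) (Suc n) - (\<lambda>k. - (w ^ k)) n) sums (0 - (\<lambda>k. - (w ^ k)) 0)"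
      by (rule telescope_sums[OF l2])
    then show ?thesis by simp
  qed
  have "(1 - w) * s = (\<Sum>n. (1 - w) * w ^ n)"
    unfolding s_def by (rule suminf_mult[OF sm, symmetric])
  also have "\<dots> = (\<Sum>n. w ^ n - w ^ Suc n)" by (simp add: algebra_simps)
  also have "\<dots> = 1" using t sums_unique by fastforce
  finally have 1: "(1 - w) * s = 1" .
  have "s * (1 - w) = (\<Sum>n. w ^ n * (1 - w))"
    unfolding s_def by (rule suminf_mult2[OF sm])
  also have "\<dots> = (\<Sum>n. w ^ n - w ^ Suc n)" by (simp add: algebra_simps power_commutes)
  also have "\<dots> = 1" using t sums_unique by fastforce
  finally have 2: "s * (1 - w) = 1" .
  show ?thesis using 1 2 unfolding alg_invertible_def by blast
qed

lemma norm_adj_le: "norm (x::'a::cstar_algebra) \<le> norm (adj x)"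
proof (cases "x = 0")
  case True then show ?thesis by simp
next
  case False
  have "(norm x)^2 \<le> norm (adj x) * norm x"
    using cstar_identity[of x] norm_mult_ineq[of "adj x" x] by simp
  then show ?thesis using False by (simp add: power2_eq_square)
qed

lemma norm_adj [simp]: "norm (adj x) = norm (x::'a::cstar_algebra)"
  using norm_adj_le[of x] norm_adj_le[of "adj x"] adj_adj[of x] by (simp add: order_antisym)

lemma adj_minus: "adj (- x) = - adj (x::'a::cstar_algebra)"
proof -
  have z: "adj 0 = (0::'a)" using adj_add[of "0::'a" 0] by simp
  have "adj (- x) + adj x = 0" using adj_add[of "- x" x] z by simp
  then show ?thesis by (simp add: eq_neg_iff_add_eq_0)
qed

lemma adj_diff: "adj (x - y) = adj x - adj (y::'a::cstar_algebra)"
  using adj_add[of x "- y"] adj_minus[of y] by simp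

lemma spec_bound: "\<mu> \<in> spectrum (a::'a::complex_banach_algebra_1) \<Longrightarrow> cmod \<mu> \<le> norm a"
proof (rule ccontr)
  assume m: "\<mu> \<in> spectrum a" and "\<not> cmod \<mu> \<le> norm a"
  then have lt: "norm a < cmod \<mu>" by simp
  then have nz: "\<mu> \<noteq> 0" by auto
  have "norm ((1/\<mu>) *\<^sub>C a) < 1"
    using lt nz by (simp add: norm_scaleC norm_divide field_simps)
  then obtain v where v: "(1 - (1/\<mu>) *\<^sub>C a) * v = 1" "v * (1 - (1/\<mu>) *\<^sub>C a) = 1"
    using neumann unfolding alg_invertible_def by blast
  have e: "\<mu> *\<^sub>C 1 - a = \<mu> *\<^sub>C (1 - (1/\<mu>) *\<^sub>C a)"
    using nz by (simp add: scaleC_diff_right scaleC_scaleC scaleC_one)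
  have "(\<mu> *\<^sub>C 1 - a) * ((1/\<mu>) *\<^sub>C v) = 1"
    unfolding e using nz by (simp add: mult_scaleC_left mult_scaleC_right scaleC_scaleC v scaleC_one)
  moreover have "((1/\<mu>) *\<^sub>C v) * (\<mu> *\<^sub>C 1 - a) = 1"
    unfolding e using nz by (simp add: mult_scaleC_left mult_scaleC_right scaleC_scaleC v scaleC_one)
  ultimately have "alg_invertible (\<mu> *\<^sub>C 1 - a)" unfolding alg_invertible_def by blast
  then show False using m unfolding spectrum_def by simp
qed

lemma spec_lower:
  fixes a b :: "'a::complex_banach_algebra_1"
  assumes ab: "a * b = 1" "b * a = 1" and m: "\<mu> \<in> spectrum a"
  shows "1 \<le> cmod \<mu> * norm b"
proof (rule ccontr)
  assume "\<not> 1 \<le> cmod \<mu> * norm b"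
  then have "norm (\<mu> *\<^sub>C b) < 1" by (simp add: norm_scaleC)
  then have "alg_invertible (1 - \<mu> *\<^sub>C b)" by (rule neumann)
  then have i1: "alg_invertible (- (1 - \<mu> *\<^sub>C b))" by (rule alg_inv_minus)
  have i0: "alg_invertible a" using ab unfolding alg_invertible_def by blast
  have "\<mu> *\<^sub>C 1 - a = a * (- (1 - \<mu> *\<^sub>C b))"
    by (simp add: algebra_simps mult_scaleC_right ab)
  then have "alg_invertible (\<mu> *\<^sub>C 1 - a)" using alg_inv_prod[OF i0 i1] by simp
  then show False using m unfolding spectrum_def by simp
qed

lemma approx_zero_div:
  fixes x y y' :: "'a::complex_banach_algebra_1"
  assumes nx: "\<not> alg_invertible x" and yy: "y * y' = 1" "y' * y = 1"
    and d: "norm (x - y) \<le> d" "0 < d"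
  shows "\<exists>z. norm z = 1 \<and> norm (x * z) \<le> 2 * d"
proof -
  have big: "1 \<le> norm y' * d"
  proof (rule ccontr)
    assume "\<not> 1 \<le> norm y' * d"
    moreover have "norm (y' * (y - x)) \<le> norm y' * d"
    proof -
      have "norm (y' * (y - x)) \<le> norm y' * norm (y - x)" by (rule norm_mult_ineq)
      also have "\<dots> \<le> norm y' * d"
        using d norm_minus_commute[of x y] by (intro mult_left_mono) auto
      finally show ?thesis .
    qed
    ultimately have "norm (y' * (y - x)) < 1" by simp
    then have "alg_invertible (1 - y' * (y - x))" by (rule neumann)
    moreover have "1 - y' * (y - x) = y' * x" by (simp add: algebra_simps yy)
    ultimately have "alg_invertible (y' * x)" by simp
    moreover have "alg_invertible y" using yy unfolding alg_invertible_def by blast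
    ultimately have "alg_invertible (y * (y' * x))" using alg_inv_prod by blast
    then have "alg_invertible x" by (simp add: mult.assoc[symmetric] yy)
    then show False using nx by simp
  qed
  then have "norm y' \<noteq> 0" by auto
  then have pos: "norm y' > 0" by simp
  define z where "z = (1 / norm y') *\<^sub>R y'"
  have nz: "norm z = 1" using pos by (simp add: z_def)
  have yz: "y * z = (1 / norm y') *\<^sub>R 1" by (simp add: z_def yy)
  have "x * z = (x - y) * z + y * z"
    by (simp add: algebra_simps)
  then have "norm (x * z) \<le> norm ((x - y) * z) + norm (y * z)"
    using norm_triangle_ineq by metis
  also have "\<dots> \<le> d + 1 / norm y'"
    using norm_mult_ineq[of "x - y" z] nz d pos unfolding yz by simp
  also have "1 / norm y' \<le> d" using big pos by (simp add: field_simps)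
  finally show ?thesis using nz by auto
qed

lemma sup_arg:
  fixes a :: "'a::complex_banach_algebra_1" and lam v :: complex
  assumes v: "cmod v = 1" and L: "0 \<le> L'" "L' < L" and lam: "lam \<in> spectrum a"
    and bnd: "\<And>t. 0 \<le> t \<Longrightarrow> t \<le> L \<Longrightarrow> lam + of_real t * v \<in> spectrum a \<Longrightarrow> t \<le> L'"
    and dl: "0 < \<delta>"
  shows "\<exists>t z. 0 \<le> t \<and> t \<le> L' \<and> lam + of_real t * v \<in> spectrum a \<and> norm z = 1
           \<and> norm (a * z - (lam + of_real t * v) *\<^sub>C z) \<le> \<delta>"
proof -
  define S where "S = {t. 0 \<le> t \<and> t \<le> L \<and> lam + of_real t * v \<in> spectrum a}"
  have 0: "0 \<in> S" using lam L by (simp add: S_def)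
  have ub: "\<And>t. t \<in> S \<Longrightarrow> t \<le> L'" using bnd unfolding S_def by blast
  have bdd: "bdd_above S" using ub unfolding bdd_above_def by blast
  define T where "T = Sup S"
  have T0: "0 \<le> T" unfolding T_def using 0 bdd by (rule cSup_upper)
  have TL: "T \<le> L'" unfolding T_def using 0 ub by (intro cSup_least) auto
  define d where "d = min (\<delta>/4) ((L - L')/2)"
  have dpos: "0 < d" using dl L by (simp add: d_def)
  have "T - d < Sup S" using dpos unfolding T_def by simp
  then obtain t where t: "t \<in> S" "T - d < t"
    using less_cSupE[of "T - d" S] 0 by blast
  have tT: "t \<le> T" unfolding T_def using t(1) bdd by (rule cSup_upper)
  have nS: "T + d \<notin> S"
  proof
    assume "T + d \<in> S"
    then have "T + d \<le> T" unfolding T_def using bdd by (rule cSup_upper)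
    then show False using dpos by simp
  qed
  have d1: "d \<le> \<delta>/4" unfolding d_def by (rule min.cobounded1)
  have d2: "d \<le> (L - L')/2" unfolding d_def by (rule min.cobounded2)
  have "T + d \<le> L' + (L - L')/2" using [[show_types, show_sorts]] by (rule add_mono[OF TL d2])
  also have "\<dots> \<le> L" using L by (simp add: field_simps)
  finally have "T + d \<le> L" .
  then have ns: "lam + of_real (T + d) * v \<notin> spectrum a" using nS T0 dpos unfolding S_def by simp
  define nu where "nu = lam + of_real (T + d) * v"
  define mu where "mu = lam + of_real t * v"
  have "alg_invertible (nu *\<^sub>C 1 - a)" using ns unfolding spectrum_def nu_def by simp
  then obtain y' where yy: "(nu *\<^sub>C 1 - a) * y' = 1" "y' * (nu *\<^sub>C 1 - a) = 1"
    unfolding alg_invertible_def by blast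
  have nx: "\<not> alg_invertible (mu *\<^sub>C 1 - a)" using t(1) unfolding S_def spectrum_def mu_def by simp
  have e1: "(mu *\<^sub>C 1 - a) - (nu *\<^sub>C 1 - a) = (mu - nu) *\<^sub>C 1" by (simp add: scaleC_diff_left)
  have e2: "mu - nu = of_real (t - (T + d)) * v" unfolding mu_def nu_def by (simp add: algebra_simps)
  have "norm ((mu *\<^sub>C 1 - a) - (nu *\<^sub>C 1 - a)) = \<bar>t - (T + d)\<bar>"
    unfolding e1 e2 norm_scaleC norm_mult v norm_of_real norm_one by simp
  also have "\<dots> \<le> 2 * d" using t tT dpos by simp
  finally have nd: "norm ((mu *\<^sub>C 1 - a) - (nu *\<^sub>C 1 - a)) \<le> 2 * d" .
  have "0 < 2 * d" using dpos by simp
  from approx_zero_div[OF nx yy nd this] obtain z where z: "norm z = 1" "norm ((mu *\<^sub>C 1 - a) * z) \<le> 2 * (2 * d)"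
    by blast
  have e3: "(mu *\<^sub>C 1 - a) * z = - (a * z - mu *\<^sub>C z)"
    by (simp add: left_diff_distrib mult_scaleC_left)
  have "norm (a * z - mu *\<^sub>C z) = norm ((mu *\<^sub>C 1 - a) * z)"
    unfolding e3 norm_minus_cancel ..
  also have "\<dots> \<le> \<delta>" using z(2) d1 by linarith
  finally have "norm (a * z - mu *\<^sub>C z) \<le> \<delta>" .
  moreover have "0 \<le> t" "t \<le> L'" "mu \<in> spectrum a" using t(1) TL tT unfolding S_def mu_def by auto
  ultimately show ?thesis using z(1) unfolding mu_def by blast
qed

lemma pow_approx_right:
  fixes q z :: "'a::complex_banach_algebra_1"
  assumes h: "norm (q * z - \<beta> *\<^sub>C z) \<le> \<eta>" and q: "norm q \<le> M" and b: "cmod \<beta> \<le> M"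
    and M: "1 \<le> M" and z: "norm z \<le> 1" and e: "0 \<le> \<eta>"
  shows "norm (q ^ k * z - (\<beta> ^ k) *\<^sub>C z) \<le> real k * M ^ k * \<eta>"
proof (induction k)
  case 0
  then show ?case by (simp add: scaleC_one)
next
  case (Suc k)
  have eq: "q ^ Suc k * z - (\<beta> ^ Suc k) *\<^sub>C z
      = q * (q ^ k * z - (\<beta> ^ k) *\<^sub>C z) + (\<beta> ^ k) *\<^sub>C (q * z - \<beta> *\<^sub>C z)"
    by (simp add: algebra_simps scaleC_diff_right mult_scaleC_right scaleC_scaleC mult.assoc)
  have M0: "0 \<le> M" using M by simp
  have "norm (q ^ Suc k * z - (\<beta> ^ Suc k) *\<^sub>C z)
      \<le> norm (q * (q ^ k * z - (\<beta> ^ k) *\<^sub>C z)) + norm ((\<beta> ^ k) *\<^sub>C (q * z - \<beta> *\<^sub>C z))"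
    unfolding eq by (rule norm_triangle_ineq)
  also have "\<dots> \<le> M * (real k * M ^ k * \<eta>) + M ^ k * \<eta>"
  proof (rule add_mono)
    show "norm (q * (q ^ k * z - (\<beta> ^ k) *\<^sub>C z)) \<le> M * (real k * M ^ k * \<eta>)"
      using norm_mult_ineq[of q "q ^ k * z - (\<beta> ^ k) *\<^sub>C z"] Suc.IH q
      by (meson M0 mult_mono norm_ge_zero order_trans)
    show "norm ((\<beta> ^ k) *\<^sub>C (q * z - \<beta> *\<^sub>C z)) \<le> M ^ k * \<eta>"
      unfolding norm_scaleC norm_power
      by (intro mult_mono power_mono h b) (auto simp: M0)
  qed
  also have "\<dots> \<le> real (Suc k) * M ^ Suc k * \<eta>"
  proof -
    have "M ^ k \<le> M ^ Suc k" using M by (simp add: power_increasing)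
    then have "M ^ k * \<eta> \<le> M ^ Suc k * \<eta>" using e by (rule mult_right_mono)
    then show ?thesis by (simp add: algebra_simps)
  qed
  finally show ?case .
qed

lemma pow_approx_left:
  fixes p w :: "'a::complex_banach_algebra_1"
  assumes h: "norm (w * p - \<alpha> *\<^sub>C w) \<le> \<eta>" and p: "norm p \<le> M" and a: "cmod \<alpha> \<le> M"
    and M: "1 \<le> M" and w: "norm w \<le> 1" and e: "0 \<le> \<eta>"
  shows "norm (w * p ^ k - (\<alpha> ^ k) *\<^sub>C w) \<le> real k * M ^ k * \<eta>"
proof (induction k)
  case 0
  then show ?case by (simp add: scaleC_one)
next
  case (Suc k)
  have eq: "w * p ^ Suc k - (\<alpha> ^ Suc k) *\<^sub>C w
      = (w * p ^ k - (\<alpha> ^ k) *\<^sub>C w) * p + (\<alpha> ^ k) *\<^sub>C (w * p - \<alpha> *\<^sub>C w)"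
    by (simp add: algebra_simps scaleC_diff_right mult_scaleC_left scaleC_scaleC mult.assoc power_commutes)
  have M0: "0 \<le> M" using M by simp
  have "norm (w * p ^ Suc k - (\<alpha> ^ Suc k) *\<^sub>C w)
      \<le> norm ((w * p ^ k - (\<alpha> ^ k) *\<^sub>C w) * p) + norm ((\<alpha> ^ k) *\<^sub>C (w * p - \<alpha> *\<^sub>C w))"
    unfolding eq by (rule norm_triangle_ineq)
  also have "\<dots> \<le> (real k * M ^ k * \<eta>) * M + M ^ k * \<eta>"
  proof (rule add_mono)
    show "norm ((w * p ^ k - (\<alpha> ^ k) *\<^sub>C w) * p) \<le> (real k * M ^ k * \<eta>) * M"
      using norm_mult_ineq[of "w * p ^ k - (\<alpha> ^ k) *\<^sub>C w" p] Suc.IH p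
      by (meson M0 mult_mono norm_ge_zero order_trans)
    show "norm ((\<alpha> ^ k) *\<^sub>C (w * p - \<alpha> *\<^sub>C w)) \<le> M ^ k * \<eta>"
      unfolding norm_scaleC norm_power
      by (intro mult_mono power_mono h a) (auto simp: M0)
  qed
  also have "\<dots> \<le> real (Suc k) * M ^ Suc k * \<eta>"
  proof -
    have "M ^ k \<le> M ^ Suc k" using M by (simp add: power_increasing)
    then have "M ^ k * \<eta> \<le> M ^ Suc k * \<eta>" using e by (rule mult_right_mono)
    then show ?thesis by (simp add: algebra_simps)
  qed
  finally show ?case .
qed

lemma Cpow1_scaleC:
  fixes p q :: "'a::complex_banach_algebra_1"
  shows "Cpow1 p q n = (\<Sum>k\<le>n. complex_of_real ((-1)^k * real (n choose k)) *\<^sub>C (p^(n-k) * q^k))"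
  unfolding Cpow1_def
proof (rule sum.cong[OF refl])
  fix k
  have e: "(-1::'a)^k * of_nat (n choose k) = of_real ((-1)^k * real (n choose k))"
    by simp
  have "(-1::'a)^k * of_nat (n choose k) * p^(n-k) * q^k
      = ((-1::'a)^k * of_nat (n choose k)) * (p^(n-k) * q^k)"
    by (simp only: mult.assoc)
  also have "\<dots> = of_real ((-1)^k * real (n choose k)) * (p^(n-k) * q^k)"
    by (simp only: e)
  also have "\<dots> = complex_of_real ((-1)^k * real (n choose k)) *\<^sub>C (p^(n-k) * q^k)"
    by (rule of_real_mult_scaleC)
  finally show "(-1::'a)^k * of_nat (n choose k) * p^(n-k) * q^k
      = complex_of_real ((-1)^k * real (n choose k)) *\<^sub>C (p^(n-k) * q^k)" .
qed

lemma binom_complex: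
  fixes \<alpha> \<beta> :: complex
  shows "(\<alpha> - \<beta>)^n = (\<Sum>k\<le>n. complex_of_real ((-1)^k * real (n choose k)) * (\<alpha>^(n-k) * \<beta>^k))"
proof -
  have "(\<alpha> - \<beta>)^n = (- \<beta> + \<alpha>)^n" by simp
  also have "\<dots> = (\<Sum>k\<le>n. of_nat (n choose k) * (- \<beta>)^k * \<alpha>^(n-k))"
    by (rule binomial_ring)
  also have "\<dots> = (\<Sum>k\<le>n. complex_of_real ((-1)^k * real (n choose k)) * (\<alpha>^(n-k) * \<beta>^k))"
    by (rule sum.cong[OF refl]) (simp add: power_minus[of \<beta>] mult_ac)
  finally show ?thesis .
qed

lemma term_est:
  fixes p q w z :: "'a::complex_banach_algebra_1"
  assumes hl: "norm (w * p - \<alpha> *\<^sub>C w) \<le> \<eta>" and hr: "norm (q * z - \<beta> *\<^sub>C z) \<le> \<eta>"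
    and p: "norm p \<le> M" and q: "norm q \<le> M" and a: "cmod \<alpha> \<le> M" and b: "cmod \<beta> \<le> M"
    and M: "1 \<le> M" and w: "norm w \<le> 1" and z: "norm z \<le> 1" and e: "0 \<le> \<eta>"
    and k: "k \<le> n"
  shows "norm (w * (p^(n-k) * q^k) * z - (\<alpha>^(n-k) * \<beta>^k) *\<^sub>C (w * z)) \<le> real n * M^n * \<eta>"
proof -
  define P where "P = p^(n-k)"
  define Q where "Q = q^k"
  define A where "A = \<alpha>^(n-k)"
  define B where "B = \<beta>^k"
  have M0: "0 \<le> M" using M by simp
  have eP: "norm (w * P - A *\<^sub>C w) \<le> real (n-k) * M^(n-k) * \<eta>"
    unfolding P_def A_def by (rule pow_approx_left[OF hl p a M w e])
  have eQ: "norm (Q * z - B *\<^sub>C z) \<le> real k * M^k * \<eta>"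
    unfolding Q_def B_def by (rule pow_approx_right[OF hr q b M z e])
  have nQz: "norm (Q * z) \<le> M^k"
  proof -
    have "norm (Q * z) \<le> norm Q * norm z" by (rule norm_mult_ineq)
    also have "\<dots> \<le> norm Q" using z by (simp add: mult_left_le)
    also have "\<dots> \<le> norm q ^ k" unfolding Q_def by (rule norm_power_ineq)
    also have "\<dots> \<le> M ^ k" using q by (simp add: power_mono)
    finally show ?thesis .
  qed
  have nA: "cmod A \<le> M^(n-k)" unfolding A_def norm_power using a by (simp add: power_mono)
  have 1: "(w * P - A *\<^sub>C w) * (Q * z) = w * (P * Q) * z - A *\<^sub>C (w * (Q * z))"
    by (simp add: left_diff_distrib mult_scaleC_left mult.assoc)
  have 2: "A *\<^sub>C (w * (Q * z - B *\<^sub>C z)) = A *\<^sub>C (w * (Q * z)) - (A * B) *\<^sub>C (w * z)"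
    by (simp add: right_diff_distrib scaleC_diff_right mult_scaleC_right scaleC_scaleC)
  have eq: "w * (P * Q) * z - (A * B) *\<^sub>C (w * z)
      = (w * P - A *\<^sub>C w) * (Q * z) + A *\<^sub>C (w * (Q * z - B *\<^sub>C z))"
    unfolding 1 2 by simp
  have "norm (w * (P * Q) * z - (A * B) *\<^sub>C (w * z))
      \<le> norm ((w * P - A *\<^sub>C w) * (Q * z)) + norm (A *\<^sub>C (w * (Q * z - B *\<^sub>C z)))"
    unfolding eq by (rule norm_triangle_ineq)
  also have "\<dots> \<le> (real (n-k) * M^(n-k) * \<eta>) * M^k + M^(n-k) * (real k * M^k * \<eta>)"
  proof (rule add_mono)
    show "norm ((w * P - A *\<^sub>C w) * (Q * z)) \<le> (real (n-k) * M^(n-k) * \<eta>) * M^k"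
    proof -
      have "norm ((w * P - A *\<^sub>C w) * (Q * z)) \<le> norm (w * P - A *\<^sub>C w) * norm (Q * z)"
        by (rule norm_mult_ineq)
      also have "\<dots> \<le> (real (n-k) * M^(n-k) * \<eta>) * M^k"
        by (rule mult_mono[OF eP nQz]) (use M0 e in auto)
      finally show ?thesis .
    qed
    have "norm (w * (Q * z - B *\<^sub>C z)) \<le> real k * M^k * \<eta>"
    proof -
      have "norm (w * (Q * z - B *\<^sub>C z)) \<le> norm w * norm (Q * z - B *\<^sub>C z)"
        by (rule norm_mult_ineq)
      also have "\<dots> \<le> 1 * (real k * M^k * \<eta>)"
        by (rule mult_mono[OF w eQ]) auto
      finally show ?thesis by simp
    qed
    then show "norm (A *\<^sub>C (w * (Q * z - B *\<^sub>C z))) \<le> M^(n-k) * (real k * M^k * \<eta>)"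
      unfolding norm_scaleC using nA M0 by (intro mult_mono) auto
  qed
  also have "\<dots> = real n * M^n * \<eta>"
  proof -
    have "M^(n-k) * M^k = M^n" using k by (simp add: power_add[symmetric])
    moreover have "real (n-k) + real k = real n" using k by simp
    ultimately have "(real (n-k) * M^(n-k) * \<eta>) * M^k + M^(n-k) * (real k * M^k * \<eta>)
        = (real (n-k) + real k) * (M^(n-k) * M^k) * \<eta>" by (simp add: algebra_simps)
    then show ?thesis using \<open>M^(n-k) * M^k = M^n\<close> \<open>real (n-k) + real k = real n\<close> by simp
  qed
  finally show ?thesis unfolding P_def Q_def A_def B_def .
qed

lemma cpow_est:
  fixes p q w z :: "'a::complex_banach_algebra_1"
  assumes hl: "norm (w * p - \<alpha> *\<^sub>C w) \<le> \<eta>" and hr: "norm (q * z - \<beta> *\<^sub>C z) \<le> \<eta>"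
    and p: "norm p \<le> M" and q: "norm q \<le> M" and a: "cmod \<alpha> \<le> M" and b: "cmod \<beta> \<le> M"
    and M: "1 \<le> M" and w: "norm w \<le> 1" and z: "norm z \<le> 1" and e: "0 \<le> \<eta>"
  shows "norm (w * Cpow1 p q n * z - ((\<alpha> - \<beta>)^n) *\<^sub>C (w * z)) \<le> 2^n * (real n * M^n * \<eta>)"
proof -
  define c where "c k = complex_of_real ((-1)^k * real (n choose k))" for k
  have L: "w * Cpow1 p q n * z = (\<Sum>k\<le>n. c k *\<^sub>C (w * (p^(n-k) * q^k) * z))"
    unfolding Cpow1_scaleC c_def
    by (simp add: sum_distrib_left sum_distrib_right mult_scaleC_left mult_scaleC_right)
  have R: "((\<alpha> - \<beta>)^n) *\<^sub>C (w * z) = (\<Sum>k\<le>n. c k *\<^sub>C ((\<alpha>^(n-k) * \<beta>^k) *\<^sub>C (w * z)))"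
    unfolding binom_complex scaleC_sum_left c_def by (simp add: scaleC_scaleC)
  have D: "w * Cpow1 p q n * z - ((\<alpha> - \<beta>)^n) *\<^sub>C (w * z)
      = (\<Sum>k\<le>n. c k *\<^sub>C (w * (p^(n-k) * q^k) * z - (\<alpha>^(n-k) * \<beta>^k) *\<^sub>C (w * z)))"
    unfolding L R by (simp add: sum_subtractf scaleC_diff_right)
  have "norm (w * Cpow1 p q n * z - ((\<alpha> - \<beta>)^n) *\<^sub>C (w * z))
      \<le> (\<Sum>k\<le>n. norm (c k *\<^sub>C (w * (p^(n-k) * q^k) * z - (\<alpha>^(n-k) * \<beta>^k) *\<^sub>C (w * z))))"
    unfolding D by (rule norm_sum)
  also have "\<dots> \<le> (\<Sum>k\<le>n. real (n choose k) * (real n * M^n * \<eta>))"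
  proof (rule sum_mono)
    fix k assume "k \<in> {..n}"
    then have k: "k \<le> n" by simp
    have ck: "cmod (c k) = real (n choose k)" unfolding c_def norm_of_real by (simp add: abs_mult power_abs)
    show "norm (c k *\<^sub>C (w * (p^(n-k) * q^k) * z - (\<alpha>^(n-k) * \<beta>^k) *\<^sub>C (w * z)))
        \<le> real (n choose k) * (real n * M^n * \<eta>)"
      unfolding norm_scaleC ck
      by (rule mult_left_mono[OF term_est[OF hl hr p q a b M w z e k]]) simp
  qed
  also have "\<dots> = 2^n * (real n * M^n * \<eta>)"
  proof -
    have "(\<Sum>k\<le>n. real (n choose k) * (real n * M^n * \<eta>)) = (\<Sum>k\<le>n. real (n choose k)) * (real n * M^n * \<eta>)"
      by (rule sum_distrib_right[symmetric])
    also have "(\<Sum>k\<le>n. real (n choose k)) = real (\<Sum>k\<le>n. n choose k)"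
      by (rule of_nat_sum[symmetric])
    also have "(\<Sum>k\<le>n. n choose k) = 2^n" by (rule choose_row_sum)
    finally show ?thesis by simp
  qed
  finally show ?thesis .
qed

lemma le_eps_lemma:
  fixes X Y K :: real
  assumes K: "0 \<le> K" and h: "\<And>\<delta>. 0 < \<delta> \<Longrightarrow> X \<le> Y + K * \<delta>"
  shows "X \<le> Y"
proof (rule ccontr)
  assume "\<not> X \<le> Y"
  then have g: "0 < X - Y" by simp
  define \<delta> where "\<delta> = (X - Y) / (2 * (K + 1))"
  have dp: "0 < \<delta>" using g K by (simp add: \<delta>_def)
  have "K * \<delta> < X - Y"
  proof -
    have "K * \<delta> = (X - Y) * (K / (2 * (K + 1)))" by (simp add: \<delta>_def)
    also have "K / (2 * (K + 1)) < 1" using K by (simp add: field_simps)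
    then have "(X - Y) * (K / (2 * (K + 1))) < (X - Y) * 1" using g by (intro mult_strict_left_mono) auto
    finally show ?thesis by simp
  qed
  then show False using h[OF dp] by simp
qed

lemma rho_pos:
  fixes x y :: "'a::real_normed_algebra_1"
  assumes c: "0 < c" and h: "\<And>n. c ^ n \<le> norm (Cpow1 x y n)"
  shows "rho x y \<noteq> 0"
proof -
  have ev: "\<forall>\<^sub>F n in sequentially. ereal c \<le> ereal (root n (norm (Cpow1 x y n)))"
  proof (rule eventually_sequentiallyI[of 1])
    fix n :: nat assume n: "1 \<le> n"
    have "c = root n (c ^ n)" using c n by (simp add: real_root_power_cancel)
    also have "\<dots> \<le> root n (norm (Cpow1 x y n))" using n h[of n] by (simp add: real_root_le_mono)
    finally show "ereal c \<le> ereal (root n (norm (Cpow1 x y n)))" by simp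
  qed
  have "ereal c \<le> rho x y" unfolding rho_def by (rule le_Limsup[OF trivial_limit_sequentially ev])
  show ?thesis
  proof
    assume "rho x y = 0"
    then have "ereal c \<le> 0" using \<open>ereal c \<le> rho x y\<close> by simp
    then show False using c by simp
  qed
qed

lemma alg_inv_props:
  fixes a :: "'a::ring_1"
  assumes "alg_invertible a"
  shows "a * alg_inv a = 1" "alg_inv a * a = 1"
proof -
  obtain y where y: "a * y = 1" "y * a = 1" using assms unfolding alg_invertible_def by blast
  have uniq: "\<And>y'. a * y' = 1 \<and> y' * a = 1 \<Longrightarrow> y' = y"
  proof -
    fix y' assume "a * y' = 1 \<and> y' * a = 1"
    then have h: "y' * a = 1" by simp
    have "y' = y' * (a * y)" using y by simp
    also have "\<dots> = (y' * a) * y" by (simp only: mult.assoc)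
    finally show "y' = y" using h by simp
  qed
  have "a * alg_inv a = 1 \<and> alg_inv a * a = 1"
    unfolding alg_inv_def
  proof (rule theI[of _ y])
    show "a * y = 1 \<and> y * a = 1" using y by (rule conjI)
    show "\<And>x. a * x = 1 \<and> x * a = 1 \<Longrightarrow> x = y" by (rule uniq)
  qed
  then show "a * alg_inv a = 1" "alg_inv a * a = 1" by auto
qed

lemma main_bound:
  fixes a q :: "'a::cstar_algebra" and f :: "complex \<Rightarrow> complex"
  assumes M: "1 \<le> M" "norm a \<le> M" "norm q \<le> M" and CC: "0 \<le> CC" and c: "0 \<le> c"
    and H: "\<And>\<delta>. 0 < \<delta> \<Longrightarrow> \<exists>\<mu> z. norm z = 1 \<and> norm (a * z - \<mu> *\<^sub>C z) \<le> \<delta>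
              \<and> norm (q * z - f \<mu> *\<^sub>C z) \<le> CC * \<delta> \<and> cmod \<mu> \<le> M \<and> cmod (f \<mu>) \<le> M
              \<and> c \<le> cmod (cnj \<mu> - f \<mu>)"
  shows "c ^ n \<le> norm (Cpow1 (adj a) q n)"
proof (rule le_eps_lemma[of "2^n * (real n * M^n * (1 + CC))"])
  show "0 \<le> 2^n * (real n * M^n * (1 + CC))" using M CC by simp
  fix \<delta> :: real assume dp: "0 < \<delta>"
  obtain \<mu> z where z: "norm z = 1" and h1: "norm (a * z - \<mu> *\<^sub>C z) \<le> \<delta>"
    and h2: "norm (q * z - f \<mu> *\<^sub>C z) \<le> CC * \<delta>" and mM: "cmod \<mu> \<le> M" and fM: "cmod (f \<mu>) \<le> M"
    and cm: "c \<le> cmod (cnj \<mu> - f \<mu>)"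
    using H[OF dp] by blast
  define w where "w = adj z"
  define \<eta> where "\<eta> = (1 + CC) * \<delta>"
  have e: "0 \<le> \<eta>" using CC dp by (simp add: \<eta>_def)
  have de: "\<delta> \<le> \<eta>" using CC dp by (simp add: \<eta>_def algebra_simps)
  have ce: "CC * \<delta> \<le> \<eta>" using CC dp by (simp add: \<eta>_def algebra_simps)
  have "w * adj a - cnj \<mu> *\<^sub>C w = adj (a * z - \<mu> *\<^sub>C z)"
    by (simp add: w_def adj_diff adj_mult adj_scaleC)
  then have hl: "norm (w * adj a - cnj \<mu> *\<^sub>C w) \<le> \<eta>" using h1 de by simp
  have hr: "norm (q * z - f \<mu> *\<^sub>C z) \<le> \<eta>" using h2 ce by simp
  have p: "norm (adj a) \<le> M" using M by simp
  have am: "cmod (cnj \<mu>) \<le> M" using mM by simp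
  have w1: "norm w \<le> 1" using z by (simp add: w_def)
  have z1: "norm z \<le> 1" using z by simp
  have est: "norm (w * Cpow1 (adj a) q n * z - ((cnj \<mu> - f \<mu>)^n) *\<^sub>C (w * z)) \<le> 2^n * (real n * M^n * \<eta>)"
    by (rule cpow_est[OF hl hr p M(3) am fM M(1) w1 z1 e])
  have nwz: "norm (w * z) = 1" using cstar_identity[of z] z by (simp add: w_def)
  have nA: "norm (w * Cpow1 (adj a) q n * z) \<le> norm (Cpow1 (adj a) q n)"
  proof -
    have "norm (w * Cpow1 (adj a) q n * z) \<le> norm (w * Cpow1 (adj a) q n) * norm z" by (rule norm_mult_ineq)
    also have "\<dots> = norm (w * Cpow1 (adj a) q n)" using z by simp
    also have "\<dots> \<le> norm w * norm (Cpow1 (adj a) q n)" by (rule norm_mult_ineq)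
    also have "\<dots> = norm (Cpow1 (adj a) q n)" using z by (simp add: w_def)
    finally show ?thesis .
  qed
  have "c ^ n \<le> cmod (cnj \<mu> - f \<mu>) ^ n" by (rule power_mono[OF cm c])
  also have "\<dots> = norm (((cnj \<mu> - f \<mu>)^n) *\<^sub>C (w * z))" by (simp add: norm_scaleC nwz norm_power)
  also have "\<dots> \<le> norm (w * Cpow1 (adj a) q n * z)
      + norm (w * Cpow1 (adj a) q n * z - ((cnj \<mu> - f \<mu>)^n) *\<^sub>C (w * z))"
    using norm_triangle_ineq4[of "w * Cpow1 (adj a) q n * z"
        "w * Cpow1 (adj a) q n * z - ((cnj \<mu> - f \<mu>)^n) *\<^sub>C (w * z)"] by simp
  also have "\<dots> \<le> norm (Cpow1 (adj a) q n) + 2^n * (real n * M^n * \<eta>)"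
    using nA est by (rule add_mono)
  also have "2^n * (real n * M^n * \<eta>) = 2^n * (real n * M^n * (1 + CC)) * \<delta>"
    by (simp add: \<eta>_def)
  finally show "c ^ n \<le> norm (Cpow1 (adj a) q n) + 2^n * (real n * M^n * (1 + CC)) * \<delta>" .
qed

lemma cnj_minus_norm: "cmod (cnj \<mu> - \<mu>) = 2 * \<bar>Im \<mu>\<bar>"
proof -
  have "cnj \<mu> - \<mu> = complex_of_real (-2 * Im \<mu>) * \<i>"
    by (simp add: complex_eq_iff)
  then show ?thesis by (simp add: norm_mult abs_mult)
qed

lemma cnj_inv_norm:
  assumes "\<mu> \<noteq> 0"
  shows "cmod (cnj \<mu> - inverse \<mu>) = \<bar>cmod \<mu> - 1 / cmod \<mu>\<bar>"
proof -
  have r: "cmod \<mu> > 0" using assms by simp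
  have n2: "complex_of_real ((cmod \<mu>)^2) = \<mu> * cnj \<mu>" by (rule complex_norm_square)
  have "inverse \<mu> = cnj \<mu> / (\<mu> * cnj \<mu>)" using assms by (simp add: field_simps)
  then have "inverse \<mu> = cnj \<mu> / complex_of_real ((cmod \<mu>)^2)" by (simp only: n2)
  then have "cnj \<mu> - inverse \<mu> = cnj \<mu> * complex_of_real (1 - 1 / (cmod \<mu>)^2)"
    by (simp add: field_simps)
  then have "cmod (cnj \<mu> - inverse \<mu>) = cmod \<mu> * \<bar>1 - 1 / (cmod \<mu>)^2\<bar>"
    by (simp only: norm_mult norm_of_real complex_mod_cnj)
  also have "\<dots> = \<bar>cmod \<mu> * (1 - 1 / (cmod \<mu>)^2)\<bar>" using r by (simp add: abs_mult)
  also have "cmod \<mu> * (1 - 1 / (cmod \<mu>)^2) = cmod \<mu> - 1 / cmod \<mu>"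
    using r by (simp add: field_simps power2_eq_square)
  finally show ?thesis .
qed

lemma part1:
  fixes a :: "'a::cstar_algebra"
  assumes r: "rho (adj a) a = 0"
  shows "spectrum a \<subseteq> \<real>"
proof
  fix lam assume lam: "lam \<in> spectrum a"
  show "lam \<in> \<real>"
  proof (rule ccontr)
    assume "lam \<notin> \<real>"
    then have im: "Im lam \<noteq> 0" by (simp add: complex_is_Real_iff)
    define s where "s = sgn (Im lam)"
    have s1: "\<bar>s\<bar> = 1" using im by (simp add: s_def abs_sgn_eq)
    define v where "v = \<i> * complex_of_real s"
    have v: "cmod v = 1" using s1 by (simp add: v_def norm_mult)
    define L' where "L' = norm a + cmod lam"
    have L: "0 \<le> L'" "L' < L' + 1" by (simp_all add: L'_def)
    have bnd: "t \<le> L'" if "0 \<le> t" "t \<le> L' + 1" "lam + of_real t * v \<in> spectrum a" for t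
    proof -
      have "t = cmod ((lam + of_real t * v) - lam)" using that(1) v by (simp add: norm_mult)
      also have "\<dots> \<le> cmod (lam + of_real t * v) + cmod lam" by (rule norm_triangle_ineq4)
      also have "\<dots> \<le> norm a + cmod lam" using spec_bound[OF that(3)] by simp
      finally show ?thesis by (simp add: L'_def)
    qed
    define c where "c = 2 * \<bar>Im lam\<bar>"
    have c: "0 < c" using im by (simp add: c_def)
    have all: "c ^ n \<le> norm (Cpow1 (adj a) a n)" for n
    proof (rule main_bound[where f = "\<lambda>x. x" and CC = 1 and M = "norm a + 1"])
      show "1 \<le> norm a + 1" "norm a \<le> norm a + 1" "norm a \<le> norm a + 1" "(0::real) \<le> 1" "0 \<le> c"
        using c by simp_all
      fix \<delta> :: real assume dp: "0 < \<delta>"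
      obtain t z where t: "0 \<le> t" "t \<le> L'" "lam + of_real t * v \<in> spectrum a" "norm z = 1"
        "norm (a * z - (lam + of_real t * v) *\<^sub>C z) \<le> \<delta>"
        using sup_arg[OF v L lam bnd dp] by blast
      define \<mu> where "\<mu> = lam + of_real t * v"
      have "Im \<mu> = Im lam + t * s" by (simp add: \<mu>_def v_def)
      then have "\<bar>Im \<mu>\<bar> = \<bar>Im lam\<bar> + t" using t(1) im
        by (auto simp: s_def sgn_if)
      then have cm: "c \<le> cmod (cnj \<mu> - \<mu>)" using t(1) by (simp add: cnj_minus_norm c_def)
      have mM: "cmod \<mu> \<le> norm a + 1" using spec_bound[OF t(3)] by (simp add: \<mu>_def)
      show "\<exists>\<mu> z. norm z = 1 \<and> norm (a * z - \<mu> *\<^sub>C z) \<le> \<delta>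
              \<and> norm (a * z - \<mu> *\<^sub>C z) \<le> 1 * \<delta> \<and> cmod \<mu> \<le> norm a + 1 \<and> cmod \<mu> \<le> norm a + 1
              \<and> c \<le> cmod (cnj \<mu> - \<mu>)"
      proof -
        have t5: "norm (a * z - \<mu> *\<^sub>C z) \<le> \<delta>" using t(5) unfolding \<mu>_def .
        show ?thesis using t(4) t5 mM cm by auto
      qed
    qed
    have "rho (adj a) a \<noteq> 0" by (rule rho_pos[OF c all])
    then show False using r by simp
  qed
qed

lemma inv_H:
  fixes a b z :: "'a::complex_banach_algebra_1"
  assumes ab: "a * b = 1" "b * a = 1" and m: "\<mu> \<in> spectrum a"
    and h: "norm (a * z - \<mu> *\<^sub>C z) \<le> \<delta>"
  shows "norm (b * z - inverse \<mu> *\<^sub>C z) \<le> norm b * norm b * \<delta>" "cmod (inverse \<mu>) \<le> norm b"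
    "\<mu> \<noteq> 0"
proof -
  have lb: "1 \<le> cmod \<mu> * norm b" by (rule spec_lower[OF ab m])
  then show nz: "\<mu> \<noteq> 0" by auto
  then have mp: "0 < cmod \<mu>" by simp
  show ib: "cmod (inverse \<mu>) \<le> norm b"
  proof -
    have "cmod (inverse \<mu>) = 1 / cmod \<mu>" by (simp add: norm_inverse divide_inverse)
    also have "\<dots> \<le> norm b" using lb mp by (simp add: divide_le_eq mult.commute)
    finally show ?thesis .
  qed
  have e1: "b * (a * z - \<mu> *\<^sub>C z) = z - \<mu> *\<^sub>C (b * z)"
    by (simp add: right_diff_distrib mult.assoc[symmetric] ab mult_scaleC_right)
  have e2: "inverse \<mu> *\<^sub>C (z - \<mu> *\<^sub>C (b * z)) = inverse \<mu> *\<^sub>C z - b * z"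
    using nz by (simp add: scaleC_diff_right scaleC_scaleC scaleC_one)
  have eq: "b * z - inverse \<mu> *\<^sub>C z = - (inverse \<mu> *\<^sub>C (b * (a * z - \<mu> *\<^sub>C z)))"
    unfolding e1 e2 by simp
  have "norm (b * z - inverse \<mu> *\<^sub>C z) = cmod (inverse \<mu>) * norm (b * (a * z - \<mu> *\<^sub>C z))"
    unfolding eq norm_minus_cancel norm_scaleC ..
  also have "\<dots> \<le> norm b * (norm b * \<delta>)"
  proof (rule mult_mono[OF ib])
    have "norm (b * (a * z - \<mu> *\<^sub>C z)) \<le> norm b * norm (a * z - \<mu> *\<^sub>C z)" by (rule norm_mult_ineq)
    also have "\<dots> \<le> norm b * \<delta>" using h by (simp add: mult_left_mono)
    finally show "norm (b * (a * z - \<mu> *\<^sub>C z)) \<le> norm b * \<delta>" .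
  qed auto
  finally show "norm (b * z - inverse \<mu> *\<^sub>C z) \<le> norm b * norm b * \<delta>" by (simp add: mult.assoc)
qed

lemma part2:
  fixes a :: "'a::cstar_algebra"
  assumes inv: "alg_invertible a" and r: "rho (adj a) (alg_inv a) = 0"
  shows "spectrum a \<subseteq> {z. cmod z = 1}"
proof
  fix lam assume lam: "lam \<in> spectrum a"
  show "lam \<in> {z. cmod z = 1}"
  proof (rule ccontr)
    assume "lam \<notin> {z. cmod z = 1}"
    then have ne: "cmod lam \<noteq> 1" by simp
    define b where "b = alg_inv a"
    have ab: "a * b = 1" "b * a = 1" using alg_inv_props[OF inv] by (simp_all add: b_def)
    have lb: "1 \<le> cmod lam * norm b" by (rule spec_lower[OF ab lam])
    have lp: "0 < cmod lam" using lb by (cases "lam = 0") auto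
    have bp: "0 < norm b" using lb by (cases "b = 0") auto
    define u where "u = lam / complex_of_real (cmod lam)"
    have u1: "cmod u = 1" using lp by (simp add: u_def norm_divide)
    have lamu: "lam = complex_of_real (cmod lam) * u" using lp by (simp add: u_def)
    have key: "\<exists>v L L' c. cmod v = 1 \<and> 0 \<le> L' \<and> L' < L \<and> 0 < c
       \<and> (\<forall>t. 0 \<le> t \<and> t \<le> L \<and> lam + of_real t * v \<in> spectrum a \<longrightarrow> t \<le> L')
       \<and> (\<forall>t. 0 \<le> t \<and> t \<le> L' \<longrightarrow> c \<le> \<bar>cmod (lam + of_real t * v) - 1 / cmod (lam + of_real t * v)\<bar>)"
    proof (cases "1 < cmod lam")
      case True
      define L' where "L' = norm a + cmod lam"
      have ev: "lam + of_real t * u = complex_of_real (cmod lam + t) * u" for t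
        by (subst lamu) (simp add: algebra_simps)
      have en: "cmod (lam + of_real t * u) = cmod lam + t" if "0 \<le> t" for t
        unfolding ev norm_mult norm_of_real u1 using that lp by simp
      show ?thesis
      proof (intro exI conjI allI impI)
        show "cmod u = 1" by (rule u1)
        show "0 \<le> L'" by (simp add: L'_def)
        show "L' < L' + 1" by simp
        have "1 / cmod lam < 1" using divide_less_eq_1_pos[OF lp, of 1] True by simp
        then show "0 < cmod lam - 1 / cmod lam" using True by linarith
        fix t assume t: "0 \<le> t \<and> t \<le> L' + 1 \<and> lam + of_real t * u \<in> spectrum a"
        then have "cmod (lam + of_real t * u) \<le> norm a" using spec_bound by blast
        then have "cmod lam + t \<le> norm a" using en[of t] t by simp
        then show "t \<le> L'" using norm_ge_zero[of lam] unfolding L'_def by linarith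
      next
        fix t assume t: "0 \<le> t \<and> t \<le> L'"
        define R where "R = cmod lam + t"
        have R1: "cmod lam \<le> R" using t by (simp add: R_def)
        have "1 / R \<le> 1 / cmod lam" using R1 lp by (simp add: frac_le)
        then have "cmod lam - 1 / cmod lam \<le> R - 1 / R" using R1 by simp
        also have "\<dots> \<le> \<bar>R - 1 / R\<bar>" by simp
        finally show "cmod lam - 1 / cmod lam \<le> \<bar>cmod (lam + of_real t * u) - 1 / cmod (lam + of_real t * u)\<bar>"
          using en[of t] t by (simp add: R_def)
      qed
    next
      case False
      then have l1: "cmod lam < 1" using ne by simp
      define L' where "L' = cmod lam - 1 / norm b"
      have ev: "lam + of_real t * (- u) = complex_of_real (cmod lam - t) * u" for t
        by (subst lamu) (simp add: algebra_simps)
      have en: "cmod (lam + of_real t * (- u)) = cmod lam - t" if "t \<le> cmod lam" for t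
        unfolding ev norm_mult norm_of_real u1 using that lp by simp
      have ib: "1 / norm b \<le> cmod lam" using lb bp by (simp add: divide_le_eq mult.commute)
      show ?thesis
      proof (intro exI conjI allI impI)
        show "cmod (- u) = 1" using u1 by simp
        show "0 \<le> L'" using ib by (simp add: L'_def)
        show "L' < cmod lam" using bp by (simp add: L'_def)
        show "0 < 1 / cmod lam - cmod lam" using l1 lp mult_strict_mono[of "cmod lam" 1 "cmod lam" 1] by (simp add: field_simps)
        fix t assume t: "0 \<le> t \<and> t \<le> cmod lam \<and> lam + of_real t * (- u) \<in> spectrum a"
        then have "1 \<le> (cmod lam - t) * norm b"
          using spec_lower[OF ab, of "lam + of_real t * (- u)"] en[of t] by simp
        then have "1 / norm b \<le> cmod lam - t" using bp by (simp add: divide_le_eq)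
        then show "t \<le> L'" by (simp add: L'_def)
      next
        fix t assume t: "0 \<le> t \<and> t \<le> L'"
        define R where "R = cmod lam - t"
        have ibp: "0 < 1 / norm b" using bp by simp
        have tl: "t \<le> cmod lam" using t ibp unfolding L'_def by linarith
        have R0: "0 < R" using t ibp unfolding R_def L'_def by linarith
        have R1: "R \<le> cmod lam" using t by (simp add: R_def)
        have "1 / cmod lam \<le> 1 / R" using R1 R0 by (simp add: frac_le)
        then have "1 / cmod lam - cmod lam \<le> 1 / R - R" using R1 by simp
        also have "\<dots> \<le> \<bar>R - 1 / R\<bar>" by simp
        finally show "1 / cmod lam - cmod lam \<le> \<bar>cmod (lam + of_real t * (- u)) - 1 / cmod (lam + of_real t * (- u))\<bar>"
          using en[OF tl] by (simp add: R_def)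
      qed
    qed
    then obtain v L L' c where v: "cmod v = 1" and L: "0 \<le> L'" "L' < L" and c: "0 < c"
      and bnd0: "\<And>t. 0 \<le> t \<and> t \<le> L \<and> lam + of_real t * v \<in> spectrum a \<Longrightarrow> t \<le> L'"
      and cb: "\<And>t. 0 \<le> t \<and> t \<le> L' \<Longrightarrow> c \<le> \<bar>cmod (lam + of_real t * v) - 1 / cmod (lam + of_real t * v)\<bar>"
      by blast
    have bnd: "t \<le> L'" if "0 \<le> t" "t \<le> L" "lam + of_real t * v \<in> spectrum a" for t
      using bnd0 that by blast
    have all: "c ^ n \<le> norm (Cpow1 (adj a) b n)" for n
    proof (rule main_bound[where f = inverse and CC = "norm b * norm b" and M = "norm a + norm b + 1"])
      show "1 \<le> norm a + norm b + 1" "norm a \<le> norm a + norm b + 1" "norm b \<le> norm a + norm b + 1"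
        "0 \<le> norm b * norm b" "0 \<le> c"
        using c by simp_all
      fix \<delta> :: real assume dp: "0 < \<delta>"
      obtain t z where t: "0 \<le> t" "t \<le> L'" "lam + of_real t * v \<in> spectrum a" "norm z = 1"
        "norm (a * z - (lam + of_real t * v) *\<^sub>C z) \<le> \<delta>"
        using sup_arg[OF v L lam bnd dp] by blast
      define \<mu> where "\<mu> = lam + of_real t * v"
      have m: "\<mu> \<in> spectrum a" using t(3) by (simp add: \<mu>_def)
      have t5: "norm (a * z - \<mu> *\<^sub>C z) \<le> \<delta>" using t(5) unfolding \<mu>_def .
      note iH = inv_H[OF ab m t5]
      have mM: "cmod \<mu> \<le> norm a + norm b + 1" using spec_bound[OF m] norm_ge_zero[of b] by linarith
      have iM: "cmod (inverse \<mu>) \<le> norm a + norm b + 1" using iH(2) norm_ge_zero[of a] by linarith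
      have cm: "c \<le> cmod (cnj \<mu> - inverse \<mu>)"
      proof -
        have "c \<le> \<bar>cmod \<mu> - 1 / cmod \<mu>\<bar>" unfolding \<mu>_def using cb[of t] t(1,2) by blast
        also have "\<dots> = cmod (cnj \<mu> - inverse \<mu>)" by (rule cnj_inv_norm[OF iH(3), symmetric])
        finally show ?thesis .
      qed
      show "\<exists>\<mu> z. norm z = 1 \<and> norm (a * z - \<mu> *\<^sub>C z) \<le> \<delta>
              \<and> norm (b * z - inverse \<mu> *\<^sub>C z) \<le> norm b * norm b * \<delta> \<and> cmod \<mu> \<le> norm a + norm b + 1
              \<and> cmod (inverse \<mu>) \<le> norm a + norm b + 1 \<and> c \<le> cmod (cnj \<mu> - inverse \<mu>)"
        using t(4) t5 iH(1) mM iM cm by blast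
    qed
    have "rho (adj a) b \<noteq> 0" by (rule rho_pos[OF c all])
    then show False using r by (simp add: b_def)
  qed
qed

theorem theorem3p5:
  fixes a :: "'a::cstar_algebra"
  shows "(rho (adj a) a = 0 \<longrightarrow> spectrum a \<subseteq> \<real>)
       \<and> (alg_invertible a \<and> rho (adj a) (alg_inv a) = 0
            \<longrightarrow> spectrum a \<subseteq> {z. cmod z = 1})"
  using part1[of a] part2[of a] by blast

end
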